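(* Let $X$ be a real Banach space and $1<p<\infty$. If $h^p(\Delta;X)$ has the Kadec–Klee property with respect to the topology $\beta$, then $X$ is midpoint locally uniformly convex.
   Context: $\Delta$ is the open unit disk in $\mathbb{C}$. A function $f:\Delta\to X$ is harmonic if it is twice continuously differentiable with zero Laplacian. $h^p(\Delta;X)$ is the space of harmonic $f:\Delta\to X$ with $\|f\|_p=\sup_{0\le r<1}(\frac{1}{2\pi}\int_0^{2\pi}\|f(re^{i\theta})\|^p\,d\theta)^{1/p}<\infty$. $\beta$ is the topology of norm uniform convergence on compact subsets of $\Delta$: $f_n\to f$ in $\beta$ iff $\sup_{z\in K}\|f_n(z)-f(z)\|\to0$ for every compact $K\subset\Delta$. A normed space $Y$ has the Kadec–Klee property with respect to a topology $\tau$ if whenever $x_n,x\in Y$ with $\|x_n\|=\|x\|=1$ for all $n$ and $x_n\to x$ in $\tau$, then $\|x_n-x\|\to0$. $X$ is midpoint locally uniformly convex if for every $x$ in the unit sphere and every $\epsilon>0$ there is $\delta>0$ with $\inf\{\max\{\|x+y\|,\|x-y\|\}:\|y\|\ge\epsilon\}\ge1+\delta$. *)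

theory Defs
  imports "HOL-Analysis.Analysis"
begin

text \<open>Harmonic on an (open) set S of the complex plane, viewed as R^2:
  twice continuously (Frechet) differentiable with zero Laplacian
  f_xx + f_yy = D2 f (1,1) + D2 f (i,i).\<close>
definition harmonic_on :: "(complex \<Rightarrow> 'a::real_normed_vector) \<Rightarrow> complex set \<Rightarrow> bool" where
  "harmonic_on f S \<longleftrightarrow>
     (\<exists>(D :: complex \<Rightarrow> (complex \<Rightarrow>\<^sub>L 'a)) (D2 :: complex \<Rightarrow> (complex \<Rightarrow>\<^sub>L (complex \<Rightarrow>\<^sub>L 'a))).
        (\<forall>z\<in>S. (f has_derivative blinfun_apply (D z)) (at z)) \<and>
        (\<forall>z\<in>S. (D has_derivative blinfun_apply (D2 z)) (at z)) \<and>
        continuous_on S D2 \<and>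
        (\<forall>z\<in>S. blinfun_apply (blinfun_apply (D2 z) 1) 1
               + blinfun_apply (blinfun_apply (D2 z) \<i>) \<i> = 0))"

definition hp_mean :: "real \<Rightarrow> (complex \<Rightarrow> 'a::real_normed_vector) \<Rightarrow> real \<Rightarrow> real" where
  "hp_mean p f r = (1 / (2 * pi)) * integral {0..2*pi} (\<lambda>\<theta>. norm (f (complex_of_real r * cis \<theta>)) powr p)"

definition in_hp :: "real \<Rightarrow> (complex \<Rightarrow> 'a::real_normed_vector) \<Rightarrow> bool" where
  "in_hp p f \<longleftrightarrow> harmonic_on f (ball 0 1) \<and>
     (\<forall>r\<in>{0..<1}. (\<lambda>\<theta>. norm (f (complex_of_real r * cis \<theta>)) powr p) integrable_on {0..2*pi}) \<and>
     bdd_above ((\<lambda>r. hp_mean p f r powr (1/p)) ` {0..<1})"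

definition hp_norm :: "real \<Rightarrow> (complex \<Rightarrow> 'a::real_normed_vector) \<Rightarrow> real" where
  "hp_norm p f = (SUP r\<in>{0..<1}. hp_mean p f r powr (1/p))"

definition beta_converges :: "(nat \<Rightarrow> complex \<Rightarrow> 'a::real_normed_vector) \<Rightarrow> (complex \<Rightarrow> 'a) \<Rightarrow> bool" where
  "beta_converges F f \<longleftrightarrow>
     (\<forall>K. compact K \<and> K \<subseteq> ball 0 1 \<longrightarrow> uniform_limit K F f sequentially)"

definition hp_kadec_klee_beta :: "real \<Rightarrow> 'a::real_normed_vector itself \<Rightarrow> bool" where
  "hp_kadec_klee_beta p _ \<longleftrightarrow>
     (\<forall>(F :: nat \<Rightarrow> complex \<Rightarrow> 'a) f.
        (\<forall>n. in_hp p (F n)) \<and> in_hp p f \<and>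
        (\<forall>n. hp_norm p (F n) = 1) \<and> hp_norm p f = 1 \<and> beta_converges F f
        \<longrightarrow> (\<lambda>n. hp_norm p (\<lambda>z. F n z - f z)) \<longlonglongrightarrow> 0)"

definition midpoint_LUC :: "'a::real_normed_vector itself \<Rightarrow> bool" where
  "midpoint_LUC _ \<longleftrightarrow>
     (\<forall>x::'a. norm x = 1 \<longrightarrow> (\<forall>\<epsilon>>0. \<exists>\<delta>>0.
        Inf ((\<lambda>y. max (norm (x + y)) (norm (x - y))) ` {y. norm y \<ge> \<epsilon>}) \<ge> 1 + \<delta>))"

end

theory Submission
  imports Defs
begin

definition Phi :: "'a::real_normed_vector \<Rightarrow> 'a \<Rightarrow> nat \<Rightarrow> complex \<Rightarrow> 'a" where
  "Phi a b k z = a + Re (z ^ k) *\<^sub>R b"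

definition BB :: "'a::real_normed_vector \<Rightarrow> complex \<Rightarrow> complex \<Rightarrow> 'a" where
  "BB b c v = Re (c * v) *\<^sub>R b"

lemma bb_bil: "bounded_bilinear (BB b)"
proof
  show "BB b (a + a') v = BB b a v + BB b a' v" for a a' v by (simp add: BB_def distrib_right scaleR_add_left)
  show "BB b a (v + v') = BB b a v + BB b a v'" for a v v' by (simp add: BB_def distrib_left scaleR_add_left)
  show "BB b (r *\<^sub>R a) v = r *\<^sub>R BB b a v" for r a v by (simp add: BB_def)
  show "BB b a (r *\<^sub>R v) = r *\<^sub>R BB b a v" for r a v by (simp add: BB_def)
  show "\<exists>K. \<forall>a v. norm (BB b a v) \<le> norm a * norm v * K"
  proof (intro exI allI)
    fix a v
    have "norm (BB b a v) = \<bar>Re (a * v)\<bar> * norm b" by (simp add: BB_def)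
    also have "\<dots> \<le> norm (a * v) * norm b" by (intro mult_right_mono abs_Re_le_cmod) auto
    finally show "norm (BB b a v) \<le> norm a * norm v * norm b" by (simp add: norm_mult)
  qed
qed

definition PP :: "'a::real_normed_vector \<Rightarrow> complex \<Rightarrow> complex \<Rightarrow>\<^sub>L 'a" where
  "PP b = bounded_bilinear.prod_right (BB b)"

lemma PP_apply[simp]: "blinfun_apply (PP b c) v = Re (c * v) *\<^sub>R b"
  unfolding PP_def by (subst bounded_bilinear.prod_right.rep_eq[OF bb_bil]) (simp add: BB_def)

lemma PP_lin: "bounded_linear (PP b)"
  unfolding PP_def by (rule bounded_bilinear.bounded_linear_prod_right[OF bb_bil])

definition BB2 :: "'a::real_normed_vector \<Rightarrow> complex \<Rightarrow> complex \<Rightarrow> (complex \<Rightarrow>\<^sub>L 'a)" where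
  "BB2 b c v = PP b (c * v)"

lemma bb2_bil: "bounded_bilinear (BB2 b)"
proof -
  interpret L: bounded_linear "PP b" by (rule PP_lin)
  obtain K where K: "\<And>x. norm (PP b x) \<le> norm x * K" using L.bounded by blast
  show ?thesis
  proof
    show "BB2 b (a + a') v = BB2 b a v + BB2 b a' v" for a a' v by (simp add: BB2_def distrib_right L.add)
    show "BB2 b a (v + v') = BB2 b a v + BB2 b a v'" for a v v' by (simp add: BB2_def distrib_left L.add)
    show "BB2 b (r *\<^sub>R a) v = r *\<^sub>R BB2 b a v" for r a v by (simp add: BB2_def L.scale[symmetric])
    show "BB2 b a (r *\<^sub>R v) = r *\<^sub>R BB2 b a v" for r a v by (simp add: BB2_def L.scale[symmetric])
    show "\<exists>K. \<forall>a v. norm (BB2 b a v) \<le> norm a * norm v * K"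
      by (rule exI[of _ K]) (auto simp: BB2_def norm_mult intro: order_trans[OF K])
  qed
qed

definition QQ :: "'a::real_normed_vector \<Rightarrow> complex \<Rightarrow> complex \<Rightarrow>\<^sub>L (complex \<Rightarrow>\<^sub>L 'a)" where
  "QQ b = bounded_bilinear.prod_right (BB2 b)"

lemma QQ_apply[simp]: "blinfun_apply (QQ b c) v = PP b (c * v)"
  unfolding QQ_def by (subst bounded_bilinear.prod_right.rep_eq[OF bb2_bil]) (simp add: BB2_def)

lemma QQ_lin: "bounded_linear (QQ b)"
  unfolding QQ_def by (rule bounded_bilinear.bounded_linear_prod_right[OF bb2_bil])

lemma harmonic_Phi: "harmonic_on (Phi a b k) S"
proof -
  define g1 where "g1 z = of_nat k * z ^ (k - 1)" for z :: complex
  define g2 where "g2 z = of_nat k * (of_nat (k-1) * z ^ (k - 1 - 1))" for z :: complex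
  define D where "D z = PP b (g1 z)" for z
  define D2 where "D2 z = QQ b (g2 z)" for z
  have 1: "(Phi a b k has_derivative blinfun_apply (D z)) (at z)" for z
  proof -
    have bl: "bounded_linear (\<lambda>w::complex. Re w *\<^sub>R b)"
      by (intro bounded_linear_compose[OF bounded_linear_scaleR_left] bounded_linear_Re)
    have "((\<lambda>z. z ^ k) has_derivative (\<lambda>y. of_nat k * y * z ^ (k - 1))) (at z)"
      using has_derivative_power[OF has_derivative_ident] by simp
    from bounded_linear.has_derivative[OF bl this]
    have "((\<lambda>z. Re (z ^ k) *\<^sub>R b) has_derivative (\<lambda>y. Re (of_nat k * y * z ^ (k - 1)) *\<^sub>R b)) (at z)" .
    then have "(Phi a b k has_derivative (\<lambda>y. Re (of_nat k * y * z ^ (k - 1)) *\<^sub>R b)) (at z)"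
      unfolding Phi_def by (intro derivative_eq_intros) auto
    moreover have "(\<lambda>y. Re (of_nat k * y * z ^ (k - 1)) *\<^sub>R b) = blinfun_apply (D z)"
      by (auto simp: D_def g1_def mult_ac)
    ultimately show ?thesis by simp
  qed
  have 2: "(D has_derivative blinfun_apply (D2 z)) (at z)" for z
  proof -
    have "(g1 has_derivative (\<lambda>y. of_nat k * (of_nat (k-1) * y * z ^ (k - 1 - 1)))) (at z)"
      unfolding g1_def
      by (intro derivative_eq_intros has_derivative_power[OF has_derivative_ident]) auto
    from bounded_linear.has_derivative[OF PP_lin this]
    have "(D has_derivative (\<lambda>y. PP b (of_nat k * (of_nat (k-1) * y * z ^ (k - 1 - 1))))) (at z)"
      unfolding D_def .
    moreover have "(\<lambda>y. PP b (of_nat k * (of_nat (k-1) * y * z ^ (k - 1 - 1)))) = blinfun_apply (D2 z)"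
      by (auto simp: D2_def g2_def mult_ac)
    ultimately show ?thesis by simp
  qed
  have 3: "continuous_on S D2"
    unfolding D2_def g2_def
    by (intro bounded_linear.continuous_on[OF QQ_lin] continuous_intros)
  have 4: "blinfun_apply (blinfun_apply (D2 z) 1) 1 + blinfun_apply (blinfun_apply (D2 z) \<i>) \<i> = 0" for z
    by (simp add: D2_def algebra_simps scaleR_add_left[symmetric])
  show ?thesis unfolding harmonic_on_def using 1 2 3 4 by blast
qed

lemma Phi_circle: "Phi a b k (complex_of_real r * cis t) = a + (r ^ k * cos (real k * t)) *\<^sub>R b"
proof -
  have "(complex_of_real r * cis t) ^ k = complex_of_real (r ^ k) * cis (real k * t)"
    by (simp add: power_mult_distrib Complex.DeMoivre)
  then show ?thesis by (simp add: Phi_def)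
qed

lemma cont_circ: "0 < p \<Longrightarrow> continuous_on A (\<lambda>t. norm (a + (c * cos (real k * t)) *\<^sub>R b) powr p)"
  by (intro continuous_on_powr' continuous_intros) auto

lemma integ_Phi: "0 < p \<Longrightarrow> (\<lambda>t. norm (Phi a b k (complex_of_real r * cis t)) powr p) integrable_on {0..2*pi}"
  unfolding Phi_circle by (intro integrable_continuous_interval cont_circ)

lemma mean_le:
  assumes "f integrable_on {0..2*pi}" "\<And>t. t \<in> {0..2*pi} \<Longrightarrow> f t \<le> C"
  shows "(1 / (2 * pi)) * integral {0..2*pi} f \<le> C"
proof -
  have "integral {0..2*pi} f \<le> integral {0..2*pi} (\<lambda>_. C)"
    by (rule integral_le[OF assms(1)]) (auto intro: assms(2))
  also have "\<dots> = 2 * pi * C" by simp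
  finally show ?thesis by (simp add: field_simps)
qed

lemma mean_nonneg: "0 \<le> hp_mean p F r"
proof -
  have "0 \<le> integral {0..2*pi} (\<lambda>t. norm (F (complex_of_real r * cis t)) powr p)"
  proof (cases "(\<lambda>t. norm (F (complex_of_real r * cis t)) powr p) integrable_on {0..2*pi}")
    case True then show ?thesis by (rule integral_nonneg) auto
  next
    case False then show ?thesis by (simp add: not_integrable_integral)
  qed
  then show ?thesis unfolding hp_mean_def by simp
qed

lemma hp_mean_Phi_le:
  assumes p: "0 < p" and r: "0 \<le> r" "r \<le> 1" and B: "\<And>s. \<bar>s\<bar> \<le> 1 \<Longrightarrow> norm (a + s *\<^sub>R b) \<le> B"
  shows "hp_mean p (Phi a b k) r \<le> B powr p"
  unfolding hp_mean_def
proof (rule mean_le[OF integ_Phi[OF p]])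
  fix t
  have "\<bar>r ^ k * cos (real k * t)\<bar> \<le> 1"
    using r by (simp add: abs_mult power_le_one mult_le_one)
  then have "norm (Phi a b k (complex_of_real r * cis t)) \<le> B" unfolding Phi_circle by (rule B)
  then show "norm (Phi a b k (complex_of_real r * cis t)) powr p \<le> B powr p"
    using p by (intro powr_mono2) auto
qed

lemma hp_mean_powr_le:
  assumes p: "0 < p" and "hp_mean p F r \<le> B powr p" "0 \<le> B"
  shows "hp_mean p F r powr (1/p) \<le> B"
proof -
  have "hp_mean p F r powr (1/p) \<le> (B powr p) powr (1/p)"
    using assms mean_nonneg by (intro powr_mono2) auto
  also have "\<dots> = B" using p assms(3) by (simp add: powr_powr)
  finally show ?thesis .
qed

lemma in_hp_Phi: "0 < p \<Longrightarrow> in_hp p (Phi a b k)"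
  unfolding in_hp_def
proof (intro conjI harmonic_Phi ballI integ_Phi)
  assume p: "0 < p"
  have "hp_mean p (Phi a b k) r powr (1/p) \<le> norm a + norm b" if "r \<in> {0..<1}" for r
  proof (rule hp_mean_powr_le[OF p hp_mean_Phi_le[OF p]])
    show "norm (a + s *\<^sub>R b) \<le> norm a + norm b" if "\<bar>s\<bar> \<le> 1" for s
    proof -
      have "norm (a + s *\<^sub>R b) \<le> norm a + \<bar>s\<bar> * norm b" using norm_triangle_ineq[of a "s *\<^sub>R b"] by simp
      also have "\<dots> \<le> norm a + norm b" using that by (simp add: mult_left_le_one_le)
      finally show ?thesis .
    qed
  qed (use that in auto)
  then show "bdd_above ((\<lambda>r. hp_mean p (Phi a b k) r powr (1 / p)) ` {0..<1})"
    by (intro bdd_aboveI2) auto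
qed

lemma hp_norm_Phi_le:
  assumes p: "0 < p" and B: "\<And>s. \<bar>s\<bar> \<le> 1 \<Longrightarrow> norm (a + s *\<^sub>R b) \<le> B"
  shows "hp_norm p (Phi a b k) \<le> B"
  unfolding hp_norm_def
proof (rule cSUP_least)
  show "{0..<1::real} \<noteq> {}" by auto
  fix r :: real assume r: "r \<in> {0..<1}"
  have "0 \<le> B" using B[of 0] norm_ge_zero[of a] by (smt (verit) scaleR_zero_left add_0_right)
  show "hp_mean p (Phi a b k) r powr (1 / p) \<le> B"
    by (rule hp_mean_powr_le[OF p hp_mean_Phi_le[OF p _ _ B] \<open>0 \<le> B\<close>]) (use r in auto)
qed

lemma hp_norm_ge:
  assumes "in_hp p F" "r \<in> {0..<1}"
  shows "hp_mean p F r powr (1/p) \<le> hp_norm p F"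
  unfolding hp_norm_def using assms unfolding in_hp_def by (intro cSUP_upper) auto

lemma hp_mean_Phi_0: "0 < k \<Longrightarrow> hp_mean p (Phi a b k) 0 = norm a powr p"
  unfolding hp_mean_def by (simp add: Phi_def power_0_left)

lemma hp_norm_scale:
  assumes p: "0 < p" and c: "0 < c" and F: "in_hp p F"
  shows "hp_norm p (\<lambda>z. c *\<^sub>R F z) = c * hp_norm p F"
proof -
  have m: "hp_mean p (\<lambda>z. c *\<^sub>R F z) r powr (1/p) = c * hp_mean p F r powr (1/p)" for r
  proof -
    have "hp_mean p (\<lambda>z. c *\<^sub>R F z) r = c powr p * hp_mean p F r"
      unfolding hp_mean_def using c by (simp add: powr_mult)
    then show ?thesis using c p mean_nonneg[of p F r] by (simp add: powr_mult powr_powr)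
  qed
  define h where "h r = hp_mean p F r powr (1/p)" for r
  have bdd: "bdd_above (h ` {0..<1})" using F unfolding in_hp_def h_def by auto
  have ne: "{0..<1::real} \<noteq> {}" by auto
  have "(SUP r\<in>{0..<1}. c * h r) = c * (SUP r\<in>{0..<1}. h r)"
  proof (rule antisym)
    show "(SUP r\<in>{0..<1}. c * h r) \<le> c * (SUP r\<in>{0..<1}. h r)"
      using c bdd ne by (intro cSUP_least) (auto intro: mult_left_mono cSUP_upper)
    have "(SUP r\<in>{0..<1}. h r) \<le> (SUP r\<in>{0..<1}. c * h r) / c"
    proof (rule cSUP_least[OF ne])
      fix r :: real assume r: "r \<in> {0..<1}"
      have bdd2: "bdd_above ((\<lambda>r. c * h r) ` {0..<1})"
      proof -
        obtain M where "\<forall>x\<in>{0..<1}. h x \<le> M" using bdd by (auto simp: bdd_above_def)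
        then show ?thesis using c by (intro bdd_aboveI2[of _ _ "c * M"]) (auto intro: mult_left_mono)
      qed
      have "c * h r \<le> (SUP r\<in>{0..<1}. c * h r)" using r bdd2 by (intro cSUP_upper) auto
      then show "h r \<le> (SUP r\<in>{0..<1}. c * h r) / c" using c by (simp add: field_simps)
    qed
    then show "c * (SUP r\<in>{0..<1}. h r) \<le> (SUP r\<in>{0..<1}. c * h r)" using c by (simp add: field_simps)
  qed
  then show ?thesis unfolding hp_norm_def m h_def .
qed

lemma F_deriv: "0 < (k::nat) \<Longrightarrow> ((\<lambda>t. C * (t/4 + sin (2 * real k * t) / (4 * real k))) has_real_derivative C * (1/4 + cos (2 * real k * t) * (2 * real k) / (4 * real k))) (at t)"
  apply (rule derivative_eq_intros refl | simp)+
  done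

lemma int_rhs:
  assumes k: "0 < k"
  shows "((\<lambda>t. C * ((cos (real k * t))\<^sup>2 - 1/4)) has_integral (C * (pi / 2))) {0..2*pi}"
proof -
  define F where "F t = C * (t/4 + sin (2 * real k * t) / (4 * real k))" for t
  have "((\<lambda>t. C * ((cos (real k * t))\<^sup>2 - 1/4)) has_integral (F (2*pi) - F 0)) {0..2*pi}"
  proof (rule fundamental_theorem_of_calculus)
    fix t :: real
    have "(F has_real_derivative C * (1/4 + cos (2 * real k * t) * (2 * real k) / (4 * real k))) (at t)"
      unfolding F_def by (rule F_deriv[OF k])
    moreover have "C * (1/4 + cos (2 * real k * t) * (2 * real k) / (4 * real k)) = C * ((cos (real k * t))\<^sup>2 - 1/4)"
    proof -
      have e1: "cos (2 * real k * t) * (2 * real k) / (4 * real k) = cos (2 * real k * t) / 2"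
        using k by simp
      have h: "cos (2 * real k * t) = 2 * (cos (real k * t))\<^sup>2 - 1"
        using cos_double_cos[of "real k * t"] by (simp add: mult.assoc)
      have "C * (1/4 + cos (2 * real k * t) * (2 * real k) / (4 * real k)) = C * (1/4 + cos (2 * real k * t) / 2)"
        using e1 by simp
      also have "\<dots> = C * ((cos (real k * t))\<^sup>2 - 1/4)" unfolding h by (simp add: field_simps)
      finally show ?thesis .
    qed
    ultimately show "(F has_vector_derivative C * ((cos (real k * t))\<^sup>2 - 1/4)) (at t within {0..2*pi})"
      using has_field_derivative_at_within has_real_derivative_iff_has_vector_derivative by metis
  next
    show "0 \<le> 2 * pi" by simp
  qed
  moreover have "F (2*pi) - F 0 = C * (pi / 2)"
  proof -
    have "2 * real k * (2 * pi) = real (4 * k) * pi" by simp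
    then have "sin (2 * real k * (2 * pi)) = 0"
      using sin_npi[of "4 * k"] by metis
    then show ?thesis unfolding F_def by simp
  qed
  ultimately show ?thesis by simp
qed

lemma lower_mean:
  assumes p: "0 < p" and k: "0 < k" and eta: "0 < \<eta>" and a: "norm a \<le> \<eta>" and b: "8 * \<eta> \<le> norm b"
  shows "\<eta> powr p / 3 \<le> hp_mean p (Phi a b k) ((1/2) powr (1/real k))"
proof -
  define r where "r = (1/2::real) powr (1/real k)"
  have r0: "0 < r" unfolding r_def by simp
  have "r ^ k = r powr (real k)" using r0 by (rule powr_realpow[symmetric])
  also have "\<dots> = (1/2) powr (1 / real k * real k)" unfolding r_def by (rule powr_powr)
  also have "1 / real k * real k = 1" using k by simp
  finally have rk: "r ^ k = 1/2" by simp
  define C where "C = \<eta> powr p * (4/3)"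
  have C0: "0 \<le> C" unfolding C_def by simp
  have pt: "C * ((cos (real k * t))\<^sup>2 - 1/4) \<le> norm (Phi a b k (complex_of_real r * cis t)) powr p" for t
  proof (cases "(cos (real k * t))\<^sup>2 \<le> 1/4")
    case True
    then have "C * ((cos (real k * t))\<^sup>2 - 1/4) \<le> 0" using C0
      by (intro mult_nonneg_nonpos) auto
    then show ?thesis using powr_ge_zero order_trans by blast
  next
    case False
    have c: "1/2 < \<bar>cos (real k * t)\<bar>"
    proof (rule ccontr)
      assume "\<not> 1/2 < \<bar>cos (real k * t)\<bar>"
      then have "\<bar>cos (real k * t)\<bar> * \<bar>cos (real k * t)\<bar> \<le> 1/2 * (1/2)"
        by (intro mult_mono) auto
      then have "(cos (real k * t))\<^sup>2 \<le> 1/4" by (simp add: power2_eq_square abs_mult_self)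
      then show False using False by simp
    qed
    have c1: "(cos (real k * t))\<^sup>2 \<le> 1" using sin_cos_squared_add[of "real k * t"] zero_le_power2[of "sin (real k * t)"] by linarith
    have "1/4 * norm b \<le> 1/2 * \<bar>cos (real k * t)\<bar> * norm b"
      using c by (intro mult_right_mono) auto
    also have "\<dots> = norm ((1/2 * cos (real k * t)) *\<^sub>R b)" by simp
    finally have nb: "1/4 * norm b \<le> norm ((1/2 * cos (real k * t)) *\<^sub>R b)" .
    have "norm ((1/2 * cos (real k * t)) *\<^sub>R b) - norm a \<le> norm (a + (1/2 * cos (real k * t)) *\<^sub>R b)"
      using norm_diff_ineq[of "(1/2 * cos (real k * t)) *\<^sub>R b" a] by (simp add: add.commute)
    then have g: "\<eta> \<le> norm (a + (1/2 * cos (real k * t)) *\<^sub>R b)"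
      using nb a b by linarith
    have "C * ((cos (real k * t))\<^sup>2 - 1/4) \<le> C * (3/4)" using c1 C0
      by (intro mult_left_mono) auto
    also have "\<dots> = \<eta> powr p" unfolding C_def by simp
    also have "\<eta> powr p \<le> norm (a + (1/2 * cos (real k * t)) *\<^sub>R b) powr p"
      using g eta p by (intro powr_mono2) auto
    finally show ?thesis unfolding Phi_circle rk by simp
  qed
  have "C * (pi/2) \<le> integral {0..2*pi} (\<lambda>t. norm (Phi a b k (complex_of_real r * cis t)) powr p)"
    by (rule has_integral_le[OF int_rhs[OF k] integrable_integral[OF integ_Phi[OF p]]]) (rule pt)
  then have "(1 / (2 * pi)) * (C * (pi/2)) \<le> hp_mean p (Phi a b k) r"
    unfolding hp_mean_def by (intro mult_left_mono) auto
  moreover have "(1 / (2 * pi)) * (C * (pi/2)) = \<eta> powr p / 3" unfolding C_def by simp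
  ultimately show ?thesis unfolding r_def by simp
qed

lemma Phi_diff: "Phi ((1/c) *\<^sub>R x) ((1/c) *\<^sub>R y) k z - x = (1 / c - 1) *\<^sub>R x + (Re (z ^ k) / c) *\<^sub>R y"
  by (simp add: Phi_def algebra_simps)

lemma Phi_bnd:
  assumes cn: "1 \<le> c" and Yb: "norm y \<le> 2" and z: "norm z \<le> \<rho>"
  shows "dist (Phi ((1/c) *\<^sub>R x) ((1/c) *\<^sub>R y) k z) x \<le> \<bar>1 / c - 1\<bar> * norm x + 2 * \<rho> ^ k"
proof -
  have "\<bar>Re (z ^ k)\<bar> \<le> norm z ^ k" by (metis abs_Re_le_cmod norm_power)
  also have "\<dots> \<le> \<rho> ^ k" using z by (intro power_mono) auto
  finally have re: "\<bar>Re (z ^ k)\<bar> \<le> \<rho> ^ k" .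
  have "norm ((Re (z ^ k) / c) *\<^sub>R y) = \<bar>Re (z ^ k)\<bar> * norm y / c"
    using cn by simp
  also have "\<dots> \<le> \<bar>Re (z ^ k)\<bar> * norm y"
    using cn by (intro frac_le[where w=1, simplified]) auto
  also have "\<dots> \<le> \<rho> ^ k * 2" using re Yb by (intro mult_mono) auto
  finally have "norm ((Re (z ^ k) / c) *\<^sub>R y) \<le> 2 * \<rho> ^ k" by simp
  then show ?thesis unfolding dist_norm Phi_diff using norm_triangle_ineq[of "(1 / c - 1) *\<^sub>R x" "(Re (z ^ k) / c) *\<^sub>R y"]
    by simp
qed

lemma beta_Phi:
  assumes cs: "c \<longlonglongrightarrow> 1" and Yb: "\<And>n. norm (Y n) \<le> 2" and c1: "\<And>n. 1 \<le> c n"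
  shows "beta_converges (\<lambda>n. Phi ((1/c n) *\<^sub>R x) ((1/c n) *\<^sub>R Y n) (Suc n)) (\<lambda>z. x)"
  unfolding beta_converges_def
proof (intro allI impI)
  fix K :: "complex set" assume K: "compact K \<and> K \<subseteq> ball 0 1"
  show "uniform_limit K (\<lambda>n. Phi ((1/c n) *\<^sub>R x) ((1/c n) *\<^sub>R Y n) (Suc n)) (\<lambda>z. x) sequentially"
  proof (cases "K = {}")
    case True then show ?thesis by (simp add: uniform_limit_iff)
  next
    case False
    obtain z0 where z0: "z0 \<in> K" "\<And>z. z \<in> K \<Longrightarrow> norm z \<le> norm z0"
      using continuous_attains_sup[of K norm] K False by (auto intro: continuous_intros)
    define \<rho> where "\<rho> = norm z0"
    have \<rho>1: "\<rho> < 1" using z0 K unfolding \<rho>_def by auto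
    have \<rho>0: "0 \<le> \<rho>" unfolding \<rho>_def by simp
    define u where "u n = \<bar>1 / c n - 1\<bar> * norm x + 2 * \<rho> ^ Suc n" for n
    have "(\<lambda>n. 1 / c n) \<longlonglongrightarrow> 1 / 1" by (intro tendsto_intros cs) simp
    then have "(\<lambda>n. \<bar>1 / c n - 1\<bar> * norm x) \<longlonglongrightarrow> \<bar>1 - 1\<bar> * norm x"
      by (intro tendsto_intros) simp
    moreover have "(\<lambda>n. 2 * \<rho> ^ Suc n) \<longlonglongrightarrow> 2 * 0"
      by (intro tendsto_intros LIMSEQ_Suc LIMSEQ_power_zero) (use \<rho>0 \<rho>1 in auto)
    ultimately have u0: "u \<longlonglongrightarrow> 0" unfolding u_def using tendsto_add by fastforce
    have bnd: "dist (Phi ((1/c n) *\<^sub>R x) ((1/c n) *\<^sub>R Y n) (Suc n) z) x \<le> u n" if z: "z \<in> K" for n z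
      unfolding u_def by (rule Phi_bnd[OF c1 Yb]) (use z0(2)[OF z] in \<open>simp add: \<rho>_def\<close>)
    show ?thesis
    proof (rule uniform_limitI)
      fix e :: real assume e: "0 < e"
      have "eventually (\<lambda>n. u n < e) sequentially" using u0 e by (rule order_tendstoD)
      then show "\<forall>\<^sub>F n in sequentially. \<forall>z\<in>K. dist (Phi ((1/c n) *\<^sub>R x) ((1/c n) *\<^sub>R Y n) (Suc n) z) x < e"
        by eventually_elim (auto intro: le_less_trans[OF bnd])
    qed
  qed
qed

lemma conv_bound:
  fixes x y :: "'a::real_normed_vector"
  assumes s: "\<bar>s\<bar> \<le> 1"
  shows "norm (x + s *\<^sub>R y) \<le> max (norm (x + y)) (norm (x - y))"
proof -
  have "((1 + s)/2) *\<^sub>R (x + y) + ((1 - s)/2) *\<^sub>R (x - y) = ((1+s)/2 + (1-s)/2) *\<^sub>R x + ((1+s)/2 - (1-s)/2) *\<^sub>R y"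
    by (simp add: algebra_simps)
  also have "((1+s)/2 + (1-s)/2) = (1::real)" by (simp add: add_divide_distrib[symmetric])
  also have "((1+s)/2 - (1-s)/2) = s" by (simp add: diff_divide_distrib[symmetric])
  finally have eq: "x + s *\<^sub>R y = ((1 + s)/2) *\<^sub>R (x + y) + ((1 - s)/2) *\<^sub>R (x - y)" by simp
  have "norm (x + s *\<^sub>R y) \<le> ((1 + s)/2) * norm (x + y) + ((1 - s)/2) * norm (x - y)"
    unfolding eq using norm_triangle_ineq[of "((1 + s)/2) *\<^sub>R (x + y)" "((1 - s)/2) *\<^sub>R (x - y)"] s
    by simp
  also have "\<dots> \<le> ((1 + s)/2) * max (norm (x + y)) (norm (x - y)) + ((1 - s)/2) * max (norm (x + y)) (norm (x - y))"
    using s by (intro add_mono mult_left_mono) auto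
  also have "\<dots> = max (norm (x + y)) (norm (x - y))" by (simp add: field_simps)
  finally show ?thesis .
qed

theorem theorem3p4:
  fixes p :: real
  assumes "1 < p"
    and "hp_kadec_klee_beta p TYPE('a::banach)"
  shows "midpoint_LUC TYPE('a)"
proof (rule ccontr)
  have p: "0 < p" using assms(1) by simp
  assume "\<not> midpoint_LUC TYPE('a)"
  then obtain x :: 'a and \<epsilon> where x: "norm x = 1" and e: "\<epsilon> > 0" and
    H: "\<And>\<delta>. \<delta> > 0 \<Longrightarrow> \<not> (1 + \<delta> \<le> Inf ((\<lambda>y. max (norm (x + y)) (norm (x - y))) ` {y. norm y \<ge> \<epsilon>}))"
    unfolding midpoint_LUC_def by auto
  define S where "S = (\<lambda>y. max (norm (x + y)) (norm (x - y))) ` {y. norm y \<ge> \<epsilon>}"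
  have Sne: "S \<noteq> {}" unfolding S_def using x e by (auto intro!: exI[of _ "\<epsilon> *\<^sub>R x"])
  have "\<exists>y. \<epsilon> \<le> norm y \<and> max (norm (x + y)) (norm (x - y)) < 1 + 1 / (real n + 1)" for n
  proof -
    have "Inf S < 1 + 1 / (real n + 1)" using H[of "1 / (real n + 1)"] unfolding S_def by auto
    from cInf_lessD[OF Sne this] show ?thesis unfolding S_def by auto
  qed
  then obtain Y where Y: "\<And>n. \<epsilon> \<le> norm (Y n)" "\<And>n. max (norm (x + Y n)) (norm (x - Y n)) < 1 + 1 / (real n + 1)"
    by metis
  define m where "m n = max (norm (x + Y n)) (norm (x - Y n))" for n
  have m1: "1 \<le> m n" for n
  proof -
    have "norm (2 *\<^sub>R x) \<le> norm (x + Y n) + norm (x - Y n)"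
      using norm_triangle_ineq[of "x + Y n" "x - Y n"] by (simp add: scaleR_2)
    then show ?thesis using x unfolding m_def by simp
  qed
  have mY: "norm (Y n) \<le> m n" for n
  proof -
    have "norm (2 *\<^sub>R Y n) \<le> norm (x + Y n) + norm (x - Y n)"
      using norm_triangle_ineq4[of "x + Y n" "x - Y n"] by (simp add: scaleR_2 norm_minus_commute)
    then show ?thesis unfolding m_def by simp
  qed
  have m2: "m n \<le> 1 + 1 / (real n + 1)" for n using Y(2)[of n] unfolding m_def by simp
  have m2': "m n \<le> 2" for n
  proof -
    have "1 / (real n + 1) \<le> 1" by simp
    then show ?thesis using m2[of n] by linarith
  qed
  define c where "c n = hp_norm p (Phi x (Y n) (Suc n))" for n
  have c_le: "c n \<le> m n" for n
    unfolding c_def m_def by (rule hp_norm_Phi_le[OF p conv_bound])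
  have c_ge: "1 \<le> c n" for n
  proof -
    have "hp_mean p (Phi x (Y n) (Suc n)) 0 powr (1/p) \<le> c n"
      unfolding c_def by (rule hp_norm_ge[OF in_hp_Phi[OF p]]) auto
    moreover have "hp_mean p (Phi x (Y n) (Suc n)) 0 powr (1/p) = 1"
      by (subst hp_mean_Phi_0) (use x in auto)
    ultimately show ?thesis by simp
  qed
  have c0: "0 < c n" for n using c_ge[of n] by simp
  have cs: "c \<longlonglongrightarrow> 1"
  proof (rule tendsto_sandwich[of "\<lambda>_. 1" _ _ "\<lambda>n. 1 + 1 / (real n + 1)"])
    show "\<forall>\<^sub>F n in sequentially. 1 \<le> c n" using c_ge by simp
    have "c n \<le> 1 + 1 / (real n + 1)" for n using c_le[of n] m2[of n] by linarith
    then show "\<forall>\<^sub>F n in sequentially. c n \<le> 1 + 1 / (real n + 1)" by simp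
    show "(\<lambda>n. 1 + 1 / (real n + 1)) \<longlonglongrightarrow> 1"
      using tendsto_add[OF tendsto_const LIMSEQ_Suc[OF lim_inverse_n']] by (simp add: add.commute)
  qed simp
  define G where "G n = Phi ((1/c n) *\<^sub>R x) ((1/c n) *\<^sub>R Y n) (Suc n)" for n
  have G_eq: "G n = (\<lambda>z. (1 / c n) *\<^sub>R Phi x (Y n) (Suc n) z)" for n
    unfolding G_def Phi_def by (simp add: fun_eq_iff scaleR_add_right)
  have G_norm: "hp_norm p (G n) = 1" for n
    unfolding G_eq using hp_norm_scale[OF p _ in_hp_Phi[OF p], of "1 / c n" x "Y n" "Suc n"] c0[of n]
    by (simp add: c_def)
  define f where "f = (\<lambda>z::complex. x)"
  have f_eq: "f = Phi x 0 1" unfolding f_def Phi_def by simp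
  have f_norm: "hp_norm p f = 1"
  proof (rule antisym)
    show "hp_norm p f \<le> 1" unfolding f_eq by (rule hp_norm_Phi_le[OF p]) (use x in simp)
    have "hp_mean p f 0 powr (1/p) \<le> hp_norm p f"
      unfolding f_eq by (rule hp_norm_ge[OF in_hp_Phi[OF p]]) auto
    moreover have "hp_mean p f 0 powr (1/p) = 1" unfolding f_eq
      by (subst hp_mean_Phi_0) (use x in auto)
    ultimately show "1 \<le> hp_norm p f" by simp
  qed
  have beta: "beta_converges G f"
    unfolding G_def f_def by (rule beta_Phi[OF cs order_trans[OF mY m2'] c_ge])
  have lim: "(\<lambda>n. hp_norm p (\<lambda>z. G n z - f z)) \<longlonglongrightarrow> 0"
  proof -
    have KK: "\<forall>(F :: nat \<Rightarrow> complex \<Rightarrow> 'a) g. (\<forall>n. in_hp p (F n)) \<and> in_hp p g \<and> (\<forall>n. hp_norm p (F n) = 1) \<and> hp_norm p g = 1 \<and> beta_converges F g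
        \<longrightarrow> (\<lambda>n. hp_norm p (\<lambda>z. F n z - g z)) \<longlonglongrightarrow> 0"
      using assms(2) unfolding hp_kadec_klee_beta_def .
    have i1: "\<forall>n. in_hp p (G n)" unfolding G_def using in_hp_Phi[OF p] by blast
    have i2: "in_hp p f" unfolding f_eq by (rule in_hp_Phi[OF p])
    show ?thesis by (rule KK[rule_format]) (use i1 i2 G_norm f_norm beta in simp)
  qed
  define \<eta> where "\<eta> = \<epsilon> / 16"
  have eta: "0 < \<eta>" using e unfolding \<eta>_def by simp
  define L where "L = (\<eta> powr p / 3) powr (1/p)"
  have L0: "0 < L" unfolding L_def using eta by simp
  have "(\<lambda>n. 1 / c n) \<longlonglongrightarrow> 1 / 1" by (intro tendsto_intros cs) simp
  then have "(\<lambda>n. \<bar>1 / c n - 1\<bar>) \<longlonglongrightarrow> \<bar>1 - 1\<bar>" by (intro tendsto_intros) simp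
  then have ev1: "eventually (\<lambda>n. \<bar>1 / c n - 1\<bar> < \<eta>) sequentially"
    using eta by (intro order_tendstoD) auto
  have ev2: "eventually (\<lambda>n. L \<le> hp_norm p (\<lambda>z. G n z - f z)) sequentially"
    using ev1
  proof eventually_elim
    case (elim n)
    have diff: "(\<lambda>z. G n z - f z) = Phi ((1 / c n - 1) *\<^sub>R x) ((1 / c n) *\<^sub>R Y n) (Suc n)"
      unfolding G_def f_def by (simp add: fun_eq_iff Phi_def scaleR_diff_left)
    have a: "norm ((1 / c n - 1) *\<^sub>R x) \<le> \<eta>" using elim x by simp
    have "8 * \<eta> \<le> \<epsilon> / 2" unfolding \<eta>_def by simp
    also have "\<epsilon> / 2 \<le> norm (Y n) / c n"
      using Y(1)[of n] c_le[of n] m2'[of n] c0[of n] e by (intro frac_le) auto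
    also have "\<dots> = norm ((1 / c n) *\<^sub>R Y n)" using c0[of n] by simp
    finally have b: "8 * \<eta> \<le> norm ((1 / c n) *\<^sub>R Y n)" .
    define r where "r = (1/2::real) powr (1 / real (Suc n))"
    have r: "r \<in> {0..<1}"
    proof -
      have "r < 1 powr (1 / real (Suc n))" unfolding r_def by (intro powr_less_mono2) auto
      then show ?thesis unfolding r_def by simp
    qed
    have "\<eta> powr p / 3 \<le> hp_mean p (Phi ((1 / c n - 1) *\<^sub>R x) ((1 / c n) *\<^sub>R Y n) (Suc n)) r"
      unfolding r_def by (rule lower_mean[OF p _ eta a b]) simp
    then have "L \<le> hp_mean p (Phi ((1 / c n - 1) *\<^sub>R x) ((1 / c n) *\<^sub>R Y n) (Suc n)) r powr (1/p)"
      unfolding L_def using p eta by (intro powr_mono2) auto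
    also have "\<dots> \<le> hp_norm p (Phi ((1 / c n - 1) *\<^sub>R x) ((1 / c n) *\<^sub>R Y n) (Suc n))"
      by (rule hp_norm_ge[OF in_hp_Phi[OF p] r])
    finally show ?case unfolding diff .
  qed
  have ev3: "eventually (\<lambda>n. hp_norm p (\<lambda>z. G n z - f z) < L) sequentially"
    using lim L0 by (intro order_tendstoD) auto
  have "eventually (\<lambda>n. False) sequentially"
    using ev2 ev3 by eventually_elim simp
  then show False by simp
qed

end
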